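(* Let $(Q,\mathcal M)$ be a modulated quiver with $\mathcal M$ v-uniform with $\mathbb C$, and let $v$ be a vertex of $Q$ with no loop at $v$. Let $v^+=\{\alpha\in Q_1: s(\alpha)=v\}$, $v^-=\{\alpha\in Q_1:t(\alpha)=v\}$, and define a new modulation $\mathcal M'$ by $\mathcal M'(i)=\mathbb C$ for all $i\in Q_0$ and, for $\alpha\in Q_1$: $\mathcal M'(\alpha)=\mathbb C$ if $\alpha\in v^+\cup v^-$ and $\mathcal M(\alpha)=\overline{\mathbb C}$; $\mathcal M'(\alpha)=\overline{\mathbb C}$ if $\alpha\in v^+\cup v^-$ and $\mathcal M(\alpha)=\mathbb C$; $\mathcal M'(\alpha)=\mathcal M(\alpha)$ if $\alpha\notin v^+\cup v^-$. Then there is an isomorphism of $\mathbb R$-algebras $\phi:T(Q,\mathcal M)\to T(Q,\mathcal M')$ with $\phi(\mathcal M(p))=\mathcal M'(p)$ for every path $p$ of $Q$.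
   Context: Quivers $Q=(Q_0,Q_1,s,t)$ are finite; an arrow $\alpha$ goes from $s(\alpha)$ to $t(\alpha)$. Paths are written from right to left: a path of length $n\ge1$ is $p=\alpha_n\cdots\alpha_1$ with $t(\alpha_k)=s(\alpha_{k+1})$; each vertex $i$ has a trivial path $e_i$. Let $\mathbb H$ be the real quaternions. A modulation $\mathcal M$ of $Q$ assigns to each vertex $i$ a division ring $\mathcal M(i)\in\{\mathbb R,\mathbb C,\mathbb H\}$ and to each arrow $\alpha$ a simple $\mathcal M(t(\alpha))$-$\mathcal M(s(\alpha))$-bimodule $\mathcal M(\alpha)$ on which $\mathbb R$ acts centrally; $(Q,\mathcal M)$ is a modulated quiver. For the pair $(\mathbb C,\mathbb C)$ there are exactly two such simple bimodules up to isomorphism: $\mathbb C$ with action $a\cdot z\cdot b=azb$, and $\overline{\mathbb C}$, which is $\mathbb C$ as a set with action $a\cdot z\cdot b=az\bar b$. For a path $p=\alpha_n\cdots\alpha_1$ put $\mathcal M(p)=\mathcal M(\alpha_n)\otimes_{\mathcal M(s(\alpha_n))}\cdots\otimes_{\mathcal M(s(\alpha_2))}\mathcal M(\alpha_1)$, and $\mathcal M(e_i)=\mathcal M(i)$. The tensor algebra is $T(Q,\mathcal M)=\prod_{i\in Q_0}\mathcal M(i)\oplus\bigoplus_{p}\mathcal M(p)$ (sum over paths of length $\ge1$), the tensor algebra of the bimodule $\bigoplus_{\alpha}\mathcal M(\alpha)$ over $\prod_i\mathcal M(i)$. $\mathcal M$ is v-uniform with $D$ if $\mathcal M(i)=D$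 for all vertices $i$. *)

theory Defs
  imports Complex_Main
begin

record ('v, 'a) quiver =
  Qv :: "'v set"
  Qa :: "'a set"
  qs :: "'a \<Rightarrow> 'v"
  qt :: "'a \<Rightarrow> 'v"

definition wf_quiver :: "('v, 'a) quiver \<Rightarrow> bool" where
  "wf_quiver Q \<longleftrightarrow> finite (Qv Q) \<and> finite (Qa Q) \<and>
     (\<forall>\<alpha>\<in>Qa Q. qs Q \<alpha> \<in> Qv Q \<and> qt Q \<alpha> \<in> Qv Q)"

text \<open>The two simple C-C-bimodules (with R central): C and C-bar.
  A v-uniform modulation with C is given by choosing one of them per arrow.\<close>
datatype cbimod = Cstd | Cbar

fun bm_twist :: "cbimod \<Rightarrow> complex \<Rightarrow> complex" where
  "bm_twist Cstd = id"
| "bm_twist Cbar = cnj"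

definition bimod_action :: "cbimod \<Rightarrow> complex \<Rightarrow> complex \<Rightarrow> complex \<Rightarrow> complex" where
  "bimod_action B a z b = a * z * bm_twist B b"

fun flip_bimod :: "cbimod \<Rightarrow> cbimod" where
  "flip_bimod Cstd = Cbar"
| "flip_bimod Cbar = Cstd"

text \<open>Paths: a trivial path e_i, or a nonempty list of arrows listed in traversal
  order [alpha_1, ..., alpha_n] (the path alpha_n ... alpha_1), t(alpha_k) = s(alpha_(k+1)).\<close>
datatype ('v, 'a) qpath = Triv 'v | Arrs "'a list"

definition is_path :: "('v, 'a) quiver \<Rightarrow> ('v, 'a) qpath \<Rightarrow> bool" where
  "is_path Q p = (case p of Triv i \<Rightarrow> i \<in> Qv Q
     | Arrs as \<Rightarrow> as \<noteq> [] \<and> set as \<subseteq> Qa Q \<and>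
         (\<forall>k. Suc k < length as \<longrightarrow> qt Q (as ! k) = qs Q (as ! Suc k)))"

fun psrc :: "('v, 'a) quiver \<Rightarrow> ('v, 'a) qpath \<Rightarrow> 'v" where
  "psrc Q (Triv i) = i"
| "psrc Q (Arrs as) = qs Q (hd as)"

fun ptgt :: "('v, 'a) quiver \<Rightarrow> ('v, 'a) qpath \<Rightarrow> 'v" where
  "ptgt Q (Triv i) = i"
| "ptgt Q (Arrs as) = qt Q (last as)"

text \<open>Composition q p (first p, then q), defined when psrc q = ptgt p.\<close>
fun pconcat :: "('v, 'a) qpath \<Rightarrow> ('v, 'a) qpath \<Rightarrow> ('v, 'a) qpath" where
  "pconcat (Triv i) p = p"
| "pconcat q (Triv j) = q"
| "pconcat (Arrs a) (Arrs b) = Arrs (b @ a)"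

text \<open>M(p) = M(alpha_n) (x)_C ... (x)_C M(alpha_1) is identified with C via
  z_n (x) ... (x) z_1 |-> z_n tau_n(z_(n-1)) (tau_n tau_(n-1))(z_(n-2)) ...,
  under which its bimodule structure is a . z . b = a z tau_p(b), where tau_p is
  the composite of the twists of the arrows of p (id for trivial paths).\<close>
definition path_twist :: "('a \<Rightarrow> cbimod) \<Rightarrow> ('v, 'a) qpath \<Rightarrow> complex \<Rightarrow> complex" where
  "path_twist M p = (case p of Triv _ \<Rightarrow> id
     | Arrs as \<Rightarrow> foldr (\<lambda>\<alpha> f. bm_twist (M \<alpha>) \<circ> f) as id)"

text \<open>The tensor algebra T(Q,M) = prod_i M(i) (+) (+)_p M(p): an element is a
  finitely supported family (x_p) indexed by the paths of Q, x_p in M(p) = C.\<close>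
definition tcarrier :: "('v, 'a) quiver \<Rightarrow> (('v, 'a) qpath \<Rightarrow> complex) set" where
  "tcarrier Q = {x. finite {p. x p \<noteq> 0} \<and> (\<forall>p. x p \<noteq> 0 \<longrightarrow> is_path Q p)}"

definition tadd :: "(('v, 'a) qpath \<Rightarrow> complex) \<Rightarrow> (('v, 'a) qpath \<Rightarrow> complex) \<Rightarrow> ('v, 'a) qpath \<Rightarrow> complex" where
  "tadd x y = (\<lambda>p. x p + y p)"

definition tscale :: "real \<Rightarrow> (('v, 'a) qpath \<Rightarrow> complex) \<Rightarrow> ('v, 'a) qpath \<Rightarrow> complex" where
  "tscale r x = (\<lambda>p. complex_of_real r * x p)"

definition tmul :: "('v, 'a) quiver \<Rightarrow> ('a \<Rightarrow> cbimod) \<Rightarrow>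
    (('v, 'a) qpath \<Rightarrow> complex) \<Rightarrow> (('v, 'a) qpath \<Rightarrow> complex) \<Rightarrow> ('v, 'a) qpath \<Rightarrow> complex" where
  "tmul Q M x y = (\<lambda>r. \<Sum>(q, p) \<in> {(q, p). x q \<noteq> 0 \<and> y p \<noteq> 0 \<and>
       psrc Q q = ptgt Q p \<and> pconcat q p = r}. x q * path_twist M q (y p))"

definition tone :: "('v, 'a) quiver \<Rightarrow> ('v, 'a) qpath \<Rightarrow> complex" where
  "tone Q = (\<lambda>p. case p of Triv i \<Rightarrow> (if i \<in> Qv Q then 1 else 0) | Arrs _ \<Rightarrow> 0)"

definition summand :: "('v, 'a) quiver \<Rightarrow> ('v, 'a) qpath \<Rightarrow> (('v, 'a) qpath \<Rightarrow> complex) set" where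
  "summand Q p = {x \<in> tcarrier Q. \<forall>q. q \<noteq> p \<longrightarrow> x q = 0}"

definition R_alg_iso :: "('v, 'a) quiver \<Rightarrow> ('a \<Rightarrow> cbimod) \<Rightarrow> ('a \<Rightarrow> cbimod) \<Rightarrow>
    ((('v, 'a) qpath \<Rightarrow> complex) \<Rightarrow> (('v, 'a) qpath \<Rightarrow> complex)) \<Rightarrow> bool" where
  "R_alg_iso Q M M' \<phi> \<longleftrightarrow>
     bij_betw \<phi> (tcarrier Q) (tcarrier Q) \<and>
     (\<forall>x\<in>tcarrier Q. \<forall>y\<in>tcarrier Q. \<phi> (tadd x y) = tadd (\<phi> x) (\<phi> y)) \<and>
     (\<forall>r. \<forall>x\<in>tcarrier Q. \<phi> (tscale r x) = tscale r (\<phi> x)) \<and>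
     (\<forall>x\<in>tcarrier Q. \<forall>y\<in>tcarrier Q. \<phi> (tmul Q M x y) = tmul Q M' (\<phi> x) (\<phi> y)) \<and>
     \<phi> (tone Q) = tone Q"

end

theory Submission
  imports Defs
begin

definition cj :: "bool \<Rightarrow> complex \<Rightarrow> complex" where
  "cj b z = (if b then cnj z else z)"

lemma cj_cj[simp]: "cj a (cj b z) = cj (a \<noteq> b) z"
  by (auto simp: cj_def)

lemma cj_False[simp]: "cj False z = z"
  by (simp add: cj_def)

lemma cj_mult: "cj b (x * y) = cj b x * cj b y"
  by (auto simp: cj_def)

lemma cj_zero_iff[simp]: "(cj b z = 0) = (z = 0)"
  by (auto simp: cj_def)

lemma cj_sum: "cj b (sum f S) = (\<Sum>i\<in>S. cj b (f i))"
  by (auto simp: cj_def)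

lemma tw_cj: "bm_twist B z = cj (B = Cbar) z"
  by (cases B) (auto simp: cj_def)

definition par :: "('a \<Rightarrow> cbimod) \<Rightarrow> 'a list \<Rightarrow> bool" where
  "par M as = foldr (\<lambda>\<alpha> b. (M \<alpha> = Cbar) \<noteq> b) as False"

lemma foldr_cj: "foldr (\<lambda>\<alpha> f. bm_twist (M \<alpha>) \<circ> f) as id z = cj (par M as) z"
  by (induction as arbitrary: z) (auto simp: par_def tw_cj cj_def)

lemma par_flip:
  assumes noloop: "\<forall>\<alpha>\<in>Qa Q. \<not> (qs Q \<alpha> = v \<and> qt Q \<alpha> = v)"
    and M'def: "M' = (\<lambda>\<alpha>. if \<alpha> \<in> Qa Q \<and> (qs Q \<alpha> = v \<or> qt Q \<alpha> = v)
                       then flip_bimod (M \<alpha>) else M \<alpha>)"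
  shows "as \<noteq> [] \<Longrightarrow> set as \<subseteq> Qa Q \<Longrightarrow>
    (\<forall>k. Suc k < length as \<longrightarrow> qt Q (as ! k) = qs Q (as ! Suc k)) \<Longrightarrow>
    par M' as = ((qt Q (last as) = v) \<noteq> (par M as \<noteq> (qs Q (hd as) = v)))"
proof (induction as)
  case Nil
  then show ?case by simp
next
  case (Cons a as)
  have fl: "(M' a = Cbar) = ((M a = Cbar) \<noteq> ((qs Q a = v) \<noteq> (qt Q a = v)))"
    using Cons.prems noloop unfolding M'def by (cases "M a") auto
  show ?case
  proof (cases "as = []")
    case True
    then show ?thesis using fl by (auto simp: par_def)
  next
    case False
    have ch: "\<forall>k. Suc k < length as \<longrightarrow> qt Q (as ! k) = qs Q (as ! Suc k)"
      using Cons.prems(3) by (metis Suc_less_eq length_Cons nth_Cons_Suc)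
    have IH: "par M' as = ((qt Q (last as) = v) \<noteq> (par M as \<noteq> (qs Q (hd as) = v)))"
      using Cons.IH False Cons.prems(2) ch by auto
    have c0: "qt Q a = qs Q (hd as)"
      using Cons.prems(3)[rule_format, of 0] False by (simp add: hd_conv_nth)
    have "par M' (a # as) = ((M' a = Cbar) \<noteq> par M' as)" by (simp add: par_def)
    moreover have "par M (a # as) = ((M a = Cbar) \<noteq> par M as)" by (simp add: par_def)
    ultimately show ?thesis using IH fl c0 False by auto
  qed
qed

lemma ptgt_concat:
  assumes "psrc Q q = ptgt Q p" "q \<noteq> Arrs []"
  shows "ptgt Q (pconcat q p) = ptgt Q q"
  using assms by (cases q; cases p) auto

theorem lemma3p3:
  fixes Q :: "('v, 'a) quiver" and M :: "'a \<Rightarrow> cbimod" and v :: 'v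
  assumes "wf_quiver Q"
    and "v \<in> Qv Q"
    and "\<forall>\<alpha>\<in>Qa Q. \<not> (qs Q \<alpha> = v \<and> qt Q \<alpha> = v)"
  defines "M' \<equiv> (\<lambda>\<alpha>. if \<alpha> \<in> Qa Q \<and> (qs Q \<alpha> = v \<or> qt Q \<alpha> = v)
                       then flip_bimod (M \<alpha>) else M \<alpha>)"
  shows "\<exists>\<phi>. R_alg_iso Q M M' \<phi> \<and>
           (\<forall>p. is_path Q p \<longrightarrow> \<phi> ` summand Q p = summand Q p)"
proof -
  define \<phi> :: "(('v, 'a) qpath \<Rightarrow> complex) \<Rightarrow> ('v, 'a) qpath \<Rightarrow> complex"
    where "\<phi> x = (\<lambda>p. cj (ptgt Q p = v) (x p))" for x
  have invol: "\<phi> (\<phi> x) = x" for x by (rule ext) (simp add: \<phi>_def cj_def)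
  have nz: "(\<phi> x p \<noteq> 0) = (x p \<noteq> 0)" for x p by (simp add: \<phi>_def)
  have carr: "x \<in> tcarrier Q \<Longrightarrow> \<phi> x \<in> tcarrier Q" for x
    by (simp add: tcarrier_def nz)
  have summ: "x \<in> summand Q p \<Longrightarrow> \<phi> x \<in> summand Q p" for x p
    using carr by (simp add: summand_def \<phi>_def)
  have twist: "path_twist M' q z =
      cj (ptgt Q q = v) (path_twist M q (cj (psrc Q q = v) z))" if "is_path Q q" for q z
  proof (cases q)
    case (Triv i)
    then show ?thesis by (simp add: path_twist_def)
  next
    case (Arrs as)
    then have "as \<noteq> []" "set as \<subseteq> Qa Q"
      "\<forall>k. Suc k < length as \<longrightarrow> qt Q (as ! k) = qs Q (as ! Suc k)"
      using that by (auto simp: is_path_def)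
    from par_flip[OF assms(3) M'_def[THEN meta_eq_to_obj_eq] this]
    show ?thesis using Arrs by (auto simp: path_twist_def foldr_cj)
  qed
  have mul: "\<phi> (tmul Q M x y) = tmul Q M' (\<phi> x) (\<phi> y)"
    if x: "x \<in> tcarrier Q" and y: "y \<in> tcarrier Q" for x y
  proof
    fix r
    let ?S = "{(q, p). x q \<noteq> 0 \<and> y p \<noteq> 0 \<and> psrc Q q = ptgt Q p \<and> pconcat q p = r}"
    have S: "{(q, p). \<phi> x q \<noteq> 0 \<and> \<phi> y p \<noteq> 0 \<and> psrc Q q = ptgt Q p \<and> pconcat q p = r} = ?S"
      by (simp add: nz)
    have "\<phi> (tmul Q M x y) r = (\<Sum>(q,p)\<in>?S. cj (ptgt Q r = v) (x q * path_twist M q (y p)))"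
      by (simp add: \<phi>_def tmul_def cj_sum case_prod_unfold)
    also have "\<dots> = (\<Sum>(q,p)\<in>?S. \<phi> x q * path_twist M' q (\<phi> y p))"
    proof (rule sum.cong[OF refl])
      fix qp assume qp: "qp \<in> ?S"
      obtain q p where qpe: "qp = (q, p)" by (cases qp)
      have h: "x q \<noteq> 0" "y p \<noteq> 0" "psrc Q q = ptgt Q p" "pconcat q p = r"
        using qp qpe by auto
      have pq: "is_path Q q" using x h(1) by (auto simp: tcarrier_def)
      hence "q \<noteq> Arrs []" by (auto simp: is_path_def)
      hence "ptgt Q r = ptgt Q q" using h ptgt_concat by metis
      then have "cj (ptgt Q r = v) (x q * path_twist M q (y p)) = \<phi> x q * path_twist M' q (\<phi> y p)"
        using twist[OF pq] h(3) by (simp add: \<phi>_def cj_mult)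
      then show "(case qp of (q, p) \<Rightarrow> cj (ptgt Q r = v) (x q * path_twist M q (y p))) =
          (case qp of (q, p) \<Rightarrow> \<phi> x q * path_twist M' q (\<phi> y p))" using qpe by simp
    qed
    also have "\<dots> = tmul Q M' (\<phi> x) (\<phi> y) r"
      by (simp add: tmul_def S)
    finally show "\<phi> (tmul Q M x y) r = tmul Q M' (\<phi> x) (\<phi> y) r" .
  qed
  have bij: "bij_betw \<phi> (tcarrier Q) (tcarrier Q)"
    by (rule bij_betw_byWitness[where f'=\<phi>]) (auto simp: invol carr)
  have iso: "R_alg_iso Q M M' \<phi>"
    unfolding R_alg_iso_def
  proof (intro conjI ballI allI)
    show "bij_betw \<phi> (tcarrier Q) (tcarrier Q)" by (rule bij)
  next
    fix x y show "\<phi> (tadd x y) = tadd (\<phi> x) (\<phi> y)"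
      by (auto simp: \<phi>_def tadd_def cj_def)
  next
    fix r x show "\<phi> (tscale r x) = tscale r (\<phi> x)"
      by (auto simp: \<phi>_def tscale_def cj_def)
  next
    fix x y assume "x \<in> tcarrier Q" "y \<in> tcarrier Q"
    then show "\<phi> (tmul Q M x y) = tmul Q M' (\<phi> x) (\<phi> y)" by (rule mul)
  next
    show "\<phi> (tone Q) = tone Q"
      by (auto simp: \<phi>_def tone_def cj_def split: qpath.splits)
  qed
  moreover have "\<phi> ` summand Q p = summand Q p" for p
  proof
    show "\<phi> ` summand Q p \<subseteq> summand Q p" using summ by auto
    show "summand Q p \<subseteq> \<phi> ` summand Q p"
    proof
      fix x assume "x \<in> summand Q p"
      then show "x \<in> \<phi> ` summand Q p" using summ[of "\<phi> x"] invol
        by (metis image_eqI summ)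
    qed
  qed
  ultimately show ?thesis by blast
qed

end
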